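(* Let $\mathcal{G}=(G,(m,r))$ be an undirected, mutant-biased fitness graph on $n=|V|$ nodes, and let $S\subseteq V$ be a seed set. Let $T(\mathcal{G},S)$ denote the expected number of steps of the Heterogeneous Moran process started from $\mathcal{X}_0=S$ until it reaches one of the absorbing configurations $\emptyset$ or $V$. Then \[ T(\mathcal{G},S)\le \left(n^2\cdot\frac{m_{\max}}{r_{\min}}\right)^3, \] where $m_{\max}=\max_{u\in V} m(u)$ and $r_{\min}=\min_{u\in V} r(u)$.
   Context: A fitness graph is $\mathcal{G}=(G,(m,r))$ where $G=(V,E,w)$ is a strongly connected directed graph, $w(u,\cdot)$ is a probability distribution over the out-neighbours of $u$ (positive on edges), and $r,m\colon V\to(0,\infty)$ are the resident and mutant fitness functions. $G$ is undirected if $E$ is symmetric and $w(u,v)=1/d(u)$ for every edge $(u,v)$, where $d(u)$ is the degree of $u$. $\mathcal{G}$ is mutant-biased if $m(u)\ge r(u)$ for all $u\in V$. A configuration is a set $X\subseteq V$ (the mutants); the fitness of $u$ in $X$ is $f_X(u)=m(u)$ if $u\in X$ and $f_X(u)=r(u)$ otherwise. The Heterogeneous Moran process is the Markov chain $\mathcal{X}_0=S,\mathcal{X}_1,\dots$ where, from $\mathcal{X}_t=X$, a node $u$ is chosen with probability $f_X(u)/\sum_{v\in V}f_X(v)$, then a node $v$ is chosen with probability $w(u,v)$, and $v$ takes the type of $u$ (so $\mathcal{X}_{t+1}=X\cup\{v\}$ if $u\in X$ and $\mathcal{X}_{t+1}=X\setminus\{v\}$ otherwise). The configurations $\emptyset$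 and $V$ are absorbing. *)

theory Defs
  imports Complex_Main
begin

definition degree :: "('a \<times> 'a) set \<Rightarrow> 'a \<Rightarrow> nat" where
  "degree E u = card {v. (u, v) \<in> E}"

definition uweight :: "('a \<times> 'a) set \<Rightarrow> 'a \<Rightarrow> 'a \<Rightarrow> real" where
  "uweight E u v = (if (u, v) \<in> E then 1 / real (degree E u) else 0)"

definition fitness :: "('a \<Rightarrow> real) \<Rightarrow> ('a \<Rightarrow> real) \<Rightarrow> 'a set \<Rightarrow> 'a \<Rightarrow> real" where
  "fitness m r X u = (if u \<in> X then m u else r u)"

definition moran_update :: "'a set \<Rightarrow> 'a \<Rightarrow> 'a \<Rightarrow> 'a set" where
  "moran_update X u v = (if u \<in> X then insert v X else X - {v})"

definition moran_trans ::
  "'a set \<Rightarrow> ('a \<times> 'a) set \<Rightarrow> ('a \<Rightarrow> real) \<Rightarrow> ('a \<Rightarrow> real) \<Rightarrow> 'a set \<Rightarrow> 'a set \<Rightarrow> real" where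
  "moran_trans V E m r X Y =
     (\<Sum>u\<in>V. \<Sum>v\<in>V.
        if moran_update X u v = Y
        then fitness m r X u / (\<Sum>x\<in>V. fitness m r X x) * uweight E u v
        else 0)"

fun moran_dist ::
  "'a set \<Rightarrow> ('a \<times> 'a) set \<Rightarrow> ('a \<Rightarrow> real) \<Rightarrow> ('a \<Rightarrow> real) \<Rightarrow> 'a set \<Rightarrow> nat \<Rightarrow> 'a set \<Rightarrow> real" where
  "moran_dist V E m r S 0 Y = (if Y = S then 1 else 0)"
| "moran_dist V E m r S (Suc t) Y =
     (\<Sum>X\<in>Pow V. moran_dist V E m r S t X * moran_trans V E m r X Y)"

text \<open>Probability that the process has not been absorbed (in the empty set or V)
  by time t, i.e. Pr[tau > t], since the configurations {} and V are absorbing.\<close>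
definition not_absorbed_prob ::
  "'a set \<Rightarrow> ('a \<times> 'a) set \<Rightarrow> ('a \<Rightarrow> real) \<Rightarrow> ('a \<Rightarrow> real) \<Rightarrow> 'a set \<Rightarrow> nat \<Rightarrow> real" where
  "not_absorbed_prob V E m r S t = (\<Sum>X\<in>Pow V - {{}, V}. moran_dist V E m r S t X)"

text \<open>Expected absorption time T = E[tau] = sum over t of Pr[tau > t].\<close>
definition absorption_time ::
  "'a set \<Rightarrow> ('a \<times> 'a) set \<Rightarrow> ('a \<Rightarrow> real) \<Rightarrow> ('a \<Rightarrow> real) \<Rightarrow> 'a set \<Rightarrow> real" where
  "absorption_time V E m r S = (\<Sum>t. not_absorbed_prob V E m r S t)"

end

theory Submission
  imports Defs
begin

lemma crossing:
  assumes "(a, b) \<in> E\<^sup>+" "a \<in> X" "b \<notin> X"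
  shows "\<exists>u v. (u, v) \<in> E \<and> u \<in> X \<and> v \<notin> X"
proof -
  have "b \<notin> X \<longrightarrow> (\<exists>u v. (u, v) \<in> E \<and> u \<in> X \<and> v \<notin> X)"
    using assms(1)
  proof (induction rule: trancl_induct)
    case (base y) then show ?case using assms(2) by blast
  next
    case (step y z) then show ?case by blast
  qed
  then show ?thesis using assms(3) by blast
qed

locale moran =
  fixes V :: "'a set" and E :: "('a \<times> 'a) set" and m r :: "'a \<Rightarrow> real"
  assumes finV: "finite V" and neV: "V \<noteq> {}"
    and EV: "E \<subseteq> V \<times> V" and symE: "sym E"
    and conn: "\<forall>u\<in>V. \<forall>v\<in>V. (u, v) \<in> E\<^sup>+"
    and rpos: "\<forall>u\<in>V. r u > 0" and mpos: "\<forall>u\<in>V. m u > 0"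
    and mr: "\<forall>u\<in>V. m u \<ge> r u"
begin

definition "FF X = (\<Sum>x\<in>V. fitness m r X x)"
definition "q X u v = fitness m r X u / FF X * uweight E u v"
definition "dd u = real (degree E u)"
definition "phi X = (\<Sum>x\<in>X. r x / dd x)"
definition "rmin = Min (r ` V)"
definition "mmax = Max (m ` V)"
definition "nn = real (card V)"
definition "LL = rmin ^ 3 / (nn ^ 4 * mmax)"
definition "hh X = (phi V ^ 2 - phi X ^ 2) / LL"

lemma finE: "finite E"
  using EV finV by (meson finite_SigmaI finite_subset)

lemma nbrs_sub: "{v. (u, v) \<in> E} \<subseteq> V"
  using EV by blast

lemma deg_pos: "u \<in> V \<Longrightarrow> dd u > 0"
proof -
  assume u: "u \<in> V"
  have "(u, u) \<in> E\<^sup>+" using conn u by blast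
  then obtain v where "(u, v) \<in> E" by (meson converse_tranclE)
  then have "v \<in> {v. (u, v) \<in> E}" by simp
  moreover have "finite {v. (u, v) \<in> E}" using nbrs_sub finV finite_subset by blast
  ultimately have "card {v. (u, v) \<in> E} > 0" using card_gt_0_iff by blast
  then show ?thesis unfolding dd_def degree_def by simp
qed

lemma deg_le: "dd u \<le> nn"
  unfolding dd_def degree_def nn_def using nbrs_sub[of u] finV card_mono by (simp add: card_mono)

lemma wsum: "u \<in> V \<Longrightarrow> (\<Sum>v\<in>V. uweight E u v) = 1"
proof -
  assume u: "u \<in> V"
  have "(\<Sum>v\<in>V. uweight E u v) = (\<Sum>v\<in>V. if v \<in> {v. (u, v) \<in> E} then 1 / dd u else 0)"
    unfolding uweight_def dd_def by simp
  also have "\<dots> = (\<Sum>v\<in>V \<inter> {v. (u, v) \<in> E}. 1 / dd u)"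
    by (rule sum.inter_restrict[OF finV, symmetric])
  also have "V \<inter> {v. (u, v) \<in> E} = {v. (u, v) \<in> E}" using nbrs_sub by blast
  also have "(\<Sum>v\<in>{v. (u, v) \<in> E}. 1 / dd u) = dd u * (1 / dd u)"
    unfolding dd_def degree_def by simp
  also have "\<dots> = 1" using deg_pos[OF u] by simp
  finally show ?thesis .
qed

lemma uweight_nonneg: "uweight E u v \<ge> 0"
  unfolding uweight_def by simp

lemma fit_pos: "u \<in> V \<Longrightarrow> fitness m r X u > 0"
  unfolding fitness_def using rpos mpos by auto

lemma FF_pos: "FF X > 0"
  unfolding FF_def using fit_pos finV neV by (simp add: sum_pos)

lemma q_nonneg: "u \<in> V \<Longrightarrow> q X u v \<ge> 0"
  unfolding q_def using fit_pos FF_pos uweight_nonneg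
  by (metis divide_nonneg_pos less_eq_real_def mult_nonneg_nonneg)

lemma qsum: "(\<Sum>u\<in>V. \<Sum>v\<in>V. q X u v) = 1"
proof -
  have "(\<Sum>u\<in>V. \<Sum>v\<in>V. q X u v) = (\<Sum>u\<in>V. fitness m r X u / FF X * (\<Sum>v\<in>V. uweight E u v))"
    unfolding q_def by (simp add: sum_distrib_left)
  also have "\<dots> = (\<Sum>u\<in>V. fitness m r X u / FF X)"
    using wsum by simp
  also have "\<dots> = FF X / FF X" unfolding FF_def by (simp add: sum_divide_distrib[symmetric])
  also have "\<dots> = 1" using FF_pos[of X] by simp
  finally show ?thesis .
qed

lemma trans_nonneg: "moran_trans V E m r X Y \<ge> 0"
  unfolding moran_trans_def
  by (intro sum_nonneg) (use q_nonneg in \<open>auto simp: q_def FF_def\<close>)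

lemma upd_sub: "X \<subseteq> V \<Longrightarrow> v \<in> V \<Longrightarrow> moran_update X u v \<subseteq> V"
  unfolding moran_update_def by auto

lemma trans_sum:
  assumes X: "X \<subseteq> V"
  shows "(\<Sum>Y\<in>Pow V. moran_trans V E m r X Y * g Y)
       = (\<Sum>u\<in>V. \<Sum>v\<in>V. q X u v * g (moran_update X u v))"
proof -
  have "(\<Sum>Y\<in>Pow V. moran_trans V E m r X Y * g Y)
      = (\<Sum>Y\<in>Pow V. \<Sum>u\<in>V. \<Sum>v\<in>V. if moran_update X u v = Y then q X u v * g Y else 0)"
    unfolding moran_trans_def q_def FF_def
    unfolding sum_distrib_right by (intro sum.cong refl) auto
  also have "\<dots> = (\<Sum>u\<in>V. \<Sum>v\<in>V. \<Sum>Y\<in>Pow V. if moran_update X u v = Y then q X u v * g Y else 0)"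
    by (subst sum.swap) (subst sum.swap, rule refl)
  also have "\<dots> = (\<Sum>u\<in>V. \<Sum>v\<in>V. q X u v * g (moran_update X u v))"
    using upd_sub[OF X] finV by (intro sum.cong refl) (simp add: sum.delta)
  finally show ?thesis .
qed


lemma phi_nonneg: "X \<subseteq> V \<Longrightarrow> phi X \<ge> 0"
  unfolding phi_def using rpos deg_pos
  by (intro sum_nonneg) (metis divide_nonneg_pos less_eq_real_def subsetD)

lemma phi_le: "X \<subseteq> V \<Longrightarrow> phi X \<le> phi V"
  unfolding phi_def using rpos deg_pos finV
  by (intro sum_mono2) (auto intro: divide_nonneg_pos less_imp_le)

definition "Dl X u v = (if u \<in> X \<and> v \<notin> X then r v / dd v
   else if u \<notin> X \<and> v \<in> X then - (r v / dd v) else 0)"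

lemma delta: assumes "X \<subseteq> V" "v \<in> V"
  shows "phi (moran_update X u v) = phi X + Dl X u v"
proof -
  have fX: "finite X" using assms finV finite_subset by blast
  show ?thesis
    unfolding moran_update_def Dl_def phi_def
    using fX by (auto simp: sum_diff1 insert_absorb)
qed

lemma pair_nonneg: assumes X: "X \<subseteq> V" and u: "u \<in> V" and v: "v \<in> V"
  shows "q X u v * Dl X u v + q X v u * Dl X v u \<ge> 0"
proof (cases "(u, v) \<in> E")
  case False
  then have "(v, u) \<notin> E" using symE by (meson symD)
  then show ?thesis using False unfolding q_def uweight_def by simp
next
  case True
  then have vu: "(v, u) \<in> E" using symE by (meson symD)
  have a: "dd u > 0" "dd v > 0" using deg_pos u v by auto
  have F: "FF X > 0" by (rule FF_pos)
  have ru: "r u > 0" "r v > 0" "m u \<ge> r u" "m v \<ge> r v" using rpos mr u v by auto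
  show ?thesis
  proof (cases "u \<in> X \<longleftrightarrow> v \<in> X")
    case True then show ?thesis unfolding Dl_def by auto
  next
    case False
    show ?thesis
    proof (cases "u \<in> X")
      case True
      then have vX: "v \<notin> X" using False by blast
      have "q X u v * Dl X u v + q X v u * Dl X v u
          = r v * (m u - r u) / (FF X * dd u * dd v)"
        using True vX \<open>(u,v) \<in> E\<close> vu a F
        unfolding q_def Dl_def uweight_def fitness_def dd_def[symmetric]
        by (simp add: field_simps)
      also have "\<dots> \<ge> 0" using ru a F by simp
      finally show ?thesis by simp
    next
      case uX: False
      then have vX: "v \<in> X" using False by blast
      have "q X u v * Dl X u v + q X v u * Dl X v u
          = r u * (m v - r v) / (FF X * dd u * dd v)"
        using uX vX \<open>(u,v) \<in> E\<close> vu a F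
        unfolding q_def Dl_def uweight_def fitness_def dd_def[symmetric]
        by (simp add: field_simps)
      also have "\<dots> \<ge> 0" using ru a F by simp
      finally show ?thesis by simp
    qed
  qed
qed

lemma drift: assumes X: "X \<subseteq> V"
  shows "(\<Sum>u\<in>V. \<Sum>v\<in>V. q X u v * Dl X u v) \<ge> 0"
proof -
  let ?t = "\<lambda>u v. q X u v * Dl X u v"
  have "2 * (\<Sum>u\<in>V. \<Sum>v\<in>V. ?t u v) = (\<Sum>u\<in>V. \<Sum>v\<in>V. ?t u v) + (\<Sum>u\<in>V. \<Sum>v\<in>V. ?t v u)"
    by (subst (2) sum.swap) simp
  also have "\<dots> = (\<Sum>u\<in>V. \<Sum>v\<in>V. ?t u v + ?t v u)"
    by (simp add: sum.distrib)
  also have "\<dots> \<ge> 0"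
    using pair_nonneg[OF X] by (intro sum_nonneg) auto
  finally show ?thesis by simp
qed

lemma Dl_dd: "dd u = real (degree E u)" by (simp add: dd_def)


lemma second: assumes X: "X \<subseteq> V"
  shows "(\<Sum>u\<in>V. \<Sum>v\<in>V. q X u v * phi (moran_update X u v) ^ 2)
    \<ge> phi X ^ 2 + (\<Sum>u\<in>V. \<Sum>v\<in>V. q X u v * Dl X u v ^ 2)"
proof -
  have "(\<Sum>u\<in>V. \<Sum>v\<in>V. q X u v * phi (moran_update X u v) ^ 2)
      = (\<Sum>u\<in>V. \<Sum>v\<in>V. phi X ^ 2 * q X u v + 2 * phi X * (q X u v * Dl X u v) + q X u v * Dl X u v ^ 2)"
    using delta[OF X] by (intro sum.cong refl) (simp add: power2_eq_square algebra_simps)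
  also have "\<dots> = phi X ^ 2 * (\<Sum>u\<in>V. \<Sum>v\<in>V. q X u v) + 2 * phi X * (\<Sum>u\<in>V. \<Sum>v\<in>V. q X u v * Dl X u v)
       + (\<Sum>u\<in>V. \<Sum>v\<in>V. q X u v * Dl X u v ^ 2)"
    by (simp add: sum.distrib sum_distrib_left)
  also have "\<dots> \<ge> phi X ^ 2 + (\<Sum>u\<in>V. \<Sum>v\<in>V. q X u v * Dl X u v ^ 2)"
    using qsum[of X] drift[OF X] phi_nonneg[OF X] by simp
  finally show ?thesis .
qed

lemma rmin_pos: "rmin > 0"
  unfolding rmin_def using finV neV rpos by simp
lemma rmin_le: "u \<in> V \<Longrightarrow> rmin \<le> r u"
  unfolding rmin_def using finV by simp
lemma mmax_ge: "u \<in> V \<Longrightarrow> m u \<le> mmax"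
  unfolding mmax_def using finV by simp
lemma mmax_pos: "mmax > 0"
  using neV mmax_ge mpos by force
lemma nn_ge1: "nn \<ge> 1"
  unfolding nn_def using finV neV by (simp add: Suc_leI card_gt_0_iff)
lemma FF_le: "FF X \<le> nn * mmax"
proof -
  have "FF X \<le> of_nat (card V) * mmax"
    unfolding FF_def
    by (rule sum_bounded_above) (use mmax_ge mr in \<open>force simp: fitness_def\<close>)
  then show ?thesis by (simp add: nn_def)
qed
lemma LL_pos: "LL > 0"
  unfolding LL_def using rmin_pos mmax_pos nn_ge1 by simp

lemma lower: assumes X: "X \<subseteq> V" "X \<noteq> {}" "X \<noteq> V"
  shows "(\<Sum>u\<in>V. \<Sum>v\<in>V. q X u v * Dl X u v ^ 2) \<ge> LL"
proof -
  obtain a where a: "a \<in> X" using X by blast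
  obtain b where b: "b \<in> V" "b \<notin> X" using X by blast
  have "(a, b) \<in> E\<^sup>+" using conn a b X by blast
  then obtain u v where uv: "(u, v) \<in> E" "u \<in> X" "v \<notin> X" using crossing a b by metis
  have uV: "u \<in> V" and vV: "v \<in> V" using uv EV by auto
  have du: "dd u > 0" "dd u \<le> nn" and dv: "dd v > 0" "dd v \<le> nn"
    using deg_pos deg_le uV vV by auto
  have F: "FF X > 0" "FF X \<le> nn * mmax" using FF_pos FF_le by auto
  have t: "q X u v * Dl X u v ^ 2 = m u / (FF X * dd u) * (r v / dd v) ^ 2"
    using uv unfolding q_def Dl_def uweight_def fitness_def dd_def[symmetric] by simp
  have 1: "rmin / (nn * mmax * nn) \<le> m u / (FF X * dd u)"
  proof (rule frac_le)
    show "0 \<le> m u" using mpos uV by (simp add: less_imp_le)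
    show "rmin \<le> m u" using rmin_le[OF uV] mr uV by force
    show "0 < FF X * dd u" using F du by simp
    show "FF X * dd u \<le> nn * mmax * nn" using F du by (intro mult_mono) auto
  qed
  have 2: "rmin / nn \<le> r v / dd v"
    by (rule frac_le) (use rpos vV rmin_le[OF vV] dv in auto)
  have 3: "(rmin / nn) ^ 2 \<le> (r v / dd v) ^ 2"
    using 2 rmin_pos nn_ge1 by (intro power_mono) auto
  have "LL = rmin / (nn * mmax * nn) * (rmin / nn) ^ 2"
    unfolding LL_def by (simp add: power2_eq_square power3_eq_cube field_simps) (simp add: numeral_eq_Suc)
  also have "\<dots> \<le> m u / (FF X * dd u) * (r v / dd v) ^ 2"
  proof -
    have "0 \<le> m u / (FF X * dd u)" using mpos uV F du by (simp add: less_imp_le)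
    then show ?thesis using 1 3 rmin_pos nn_ge1 mmax_pos by (intro mult_mono) auto
  qed
  also have "\<dots> = q X u v * Dl X u v ^ 2" using t by simp
  also have "\<dots> \<le> (\<Sum>v'\<in>V. q X u v' * Dl X u v' ^ 2)"
    using q_nonneg[OF uV] finV vV by (intro member_le_sum) auto
  also have "\<dots> \<le> (\<Sum>u'\<in>V. \<Sum>v'\<in>V. q X u' v' * Dl X u' v' ^ 2)"
    using q_nonneg finV uV by (intro member_le_sum sum_nonneg) auto
  finally show ?thesis .
qed

lemma hh_drift: assumes X: "X \<subseteq> V"
  shows "(\<Sum>Y\<in>Pow V. moran_trans V E m r X Y * hh Y) \<le> hh X - (if X \<in> Pow V - {{}, V} then 1 else 0)"
proof -
  have "(\<Sum>Y\<in>Pow V. moran_trans V E m r X Y * hh Y) = (\<Sum>u\<in>V. \<Sum>v\<in>V. q X u v * hh (moran_update X u v))"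
    by (rule trans_sum[OF X])
  also have "\<dots> = (phi V ^ 2 * (\<Sum>u\<in>V. \<Sum>v\<in>V. q X u v) - (\<Sum>u\<in>V. \<Sum>v\<in>V. q X u v * phi (moran_update X u v) ^ 2)) / LL"
  proof -
    have "(\<Sum>u\<in>V. \<Sum>v\<in>V. q X u v * hh (moran_update X u v))
       = (\<Sum>u\<in>V. \<Sum>v\<in>V. (q X u v * phi V ^ 2 - q X u v * phi (moran_update X u v) ^ 2)) / LL"
      unfolding hh_def by (simp add: sum_divide_distrib right_diff_distrib)
    also have "\<dots> = (phi V ^ 2 * (\<Sum>u\<in>V. \<Sum>v\<in>V. q X u v) - (\<Sum>u\<in>V. \<Sum>v\<in>V. q X u v * phi (moran_update X u v) ^ 2)) / LL"
      by (simp add: sum_subtractf sum_distrib_left mult.commute)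
    finally show ?thesis .
  qed
  also have "\<dots> = (phi V ^ 2 - (\<Sum>u\<in>V. \<Sum>v\<in>V. q X u v * phi (moran_update X u v) ^ 2)) / LL"
    using qsum by simp
  also have "\<dots> \<le> (phi V ^ 2 - (phi X ^ 2 + (if X \<in> Pow V - {{}, V} then LL else 0))) / LL"
  proof -
    have "(\<Sum>u\<in>V. \<Sum>v\<in>V. q X u v * phi (moran_update X u v) ^ 2) \<ge> phi X ^ 2 + (if X \<in> Pow V - {{}, V} then LL else 0)"
    proof (cases "X \<in> Pow V - {{}, V}")
      case True
      then show ?thesis using second[OF X] lower[OF X] by auto
    next
      case False
      have "(\<Sum>u\<in>V. \<Sum>v\<in>V. q X u v * Dl X u v ^ 2) \<ge> 0"
        using q_nonneg by (intro sum_nonneg) auto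
      then show ?thesis using False second[OF X] by auto
    qed
    then show ?thesis using LL_pos by (intro divide_right_mono) auto
  qed
  also have "\<dots> = hh X - (if X \<in> Pow V - {{}, V} then 1 else 0)"
    unfolding hh_def using LL_pos by (auto simp: field_simps)
  finally show ?thesis .
qed


lemma dist_nonneg: "moran_dist V E m r S t Y \<ge> 0"
  by (induction t arbitrary: Y) (auto intro!: sum_nonneg mult_nonneg_nonneg trans_nonneg)

lemma hh_nonneg: "X \<subseteq> V \<Longrightarrow> hh X \<ge> 0"
  unfolding hh_def using LL_pos phi_nonneg phi_le
  by (intro divide_nonneg_pos) (auto intro!: power_mono)

definition "GG S t = (\<Sum>X\<in>Pow V. moran_dist V E m r S t X * hh X)"

lemma GG_step: "GG S (Suc t) \<le> GG S t - not_absorbed_prob V E m r S t"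
proof -
  let ?mu = "moran_dist V E m r S t"
  let ?K = "moran_trans V E m r"
  have "GG S (Suc t) = (\<Sum>Y\<in>Pow V. \<Sum>X\<in>Pow V. ?mu X * ?K X Y * hh Y)"
    unfolding GG_def by (simp add: sum_distrib_right)
  also have "\<dots> = (\<Sum>X\<in>Pow V. ?mu X * (\<Sum>Y\<in>Pow V. ?K X Y * hh Y))"
    by (subst sum.swap) (simp add: sum_distrib_left mult.assoc)
  also have "\<dots> \<le> (\<Sum>X\<in>Pow V. ?mu X * (hh X - (if X \<in> Pow V - {{}, V} then 1 else 0)))"
    using hh_drift dist_nonneg by (intro sum_mono mult_left_mono) auto
  also have "\<dots> = GG S t - (\<Sum>X\<in>Pow V. ?mu X * (if X \<in> Pow V - {{}, V} then 1 else 0))"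
    unfolding GG_def by (simp only: right_diff_distrib sum_subtractf)
  also have "(\<Sum>X\<in>Pow V. ?mu X * (if X \<in> Pow V - {{}, V} then 1 else 0))
      = (\<Sum>X\<in>Pow V. if X \<in> Pow V - {{}, V} then ?mu X else 0)"
    by (intro sum.cong refl) simp
  also have "(\<Sum>X\<in>Pow V. if X \<in> Pow V - {{}, V} then ?mu X else 0) = not_absorbed_prob V E m r S t"
  proof -
    have "(\<Sum>X\<in>Pow V. if X \<in> Pow V - {{}, V} then ?mu X else 0) = sum ?mu (Pow V \<inter> (Pow V - {{}, V}))"
      by (rule sum.inter_restrict[symmetric]) (use finV in simp)
    also have "Pow V \<inter> (Pow V - {{}, V}) = Pow V - {{}, V}" by blast
    finally show ?thesis unfolding not_absorbed_prob_def .
  qed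
  finally show ?thesis .
qed

lemma partial: "(\<Sum>t<N. not_absorbed_prob V E m r S t) \<le> GG S 0 - GG S N"
proof (induction N)
  case 0 then show ?case by simp
next
  case (Suc N) then show ?case using GG_step[of S N] by simp
qed

lemma GG_nonneg: "GG S t \<ge> 0"
  unfolding GG_def using dist_nonneg hh_nonneg by (intro sum_nonneg mult_nonneg_nonneg) auto

lemma GG0: "S \<subseteq> V \<Longrightarrow> GG S 0 = hh S"
proof -
  assume S: "S \<subseteq> V"
  have "GG S 0 = (\<Sum>X\<in>Pow V. if X = S then hh X else 0)"
    unfolding GG_def by (intro sum.cong refl) simp
  also have "\<dots> = hh S" using finV S by (simp add: sum.delta)
  finally show ?thesis .
qed

lemma hh_bound: "S \<subseteq> V \<Longrightarrow> hh S \<le> (nn ^ 2 * (mmax / rmin)) ^ 3"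
proof -
  assume S: "S \<subseteq> V"
  have "phi V \<le> nn * mmax"
  proof -
    have "phi V \<le> of_nat (card V) * mmax"
      unfolding phi_def
    proof (rule sum_bounded_above)
      fix x assume x: "x \<in> V"
      have d1: "dd x \<ge> 1" using deg_pos[OF x] unfolding dd_def by simp
      have "r x / dd x \<le> r x / 1" using d1 rpos x
        by (intro divide_left_mono) auto
      then have "r x / dd x \<le> r x" by simp
      also have "\<dots> \<le> mmax" using mr mmax_ge x by force
      finally show "r x / dd x \<le> mmax" .
    qed
    then show ?thesis by (simp add: nn_def)
  qed
  then have pv: "phi V ^ 2 \<le> (nn * mmax) ^ 2"
    using phi_nonneg[of V] by (intro power_mono) auto
  have "hh S \<le> phi V ^ 2 / LL"
    unfolding hh_def using LL_pos by (intro divide_right_mono) auto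
  also have "\<dots> \<le> (nn * mmax) ^ 2 / LL"
    using pv LL_pos by (intro divide_right_mono) auto
  also have "\<dots> = (nn ^ 2 * (mmax / rmin)) ^ 3"
    unfolding LL_def using rmin_pos mmax_pos nn_ge1
    by (simp add: field_simps power2_eq_square power3_eq_cube) (simp add: numeral_eq_Suc)
  finally show ?thesis .
qed

lemma main: assumes S: "S \<subseteq> V"
  shows "summable (not_absorbed_prob V E m r S) \<and>
         absorption_time V E m r S \<le> (nn ^ 2 * (mmax / rmin)) ^ 3"
proof -
  have nn: "\<And>t. not_absorbed_prob V E m r S t \<ge> 0"
    unfolding not_absorbed_prob_def using dist_nonneg by (intro sum_nonneg) auto
  have b: "\<And>N. (\<Sum>t<N. not_absorbed_prob V E m r S t) \<le> hh S"
    using partial GG_nonneg GG0[OF S] by (smt (verit))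
  have sm: "summable (not_absorbed_prob V E m r S)"
    by (rule summableI_nonneg_bounded[OF nn b])
  have "absorption_time V E m r S \<le> hh S"
    unfolding absorption_time_def by (rule suminf_le_const[OF sm b])
  then show ?thesis using sm hh_bound[OF S] by simp
qed

end

theorem lemma1:
  fixes V :: "'a set" and E :: "('a \<times> 'a) set" and m r :: "'a \<Rightarrow> real" and S :: "'a set"
  assumes "finite V" and "V \<noteq> {}"
    and "E \<subseteq> V \<times> V" and "sym E"
    and "\<forall>u\<in>V. \<forall>v\<in>V. (u, v) \<in> E\<^sup>+"
    and "\<forall>u\<in>V. r u > 0" and "\<forall>u\<in>V. m u > 0"
    and "\<forall>u\<in>V. m u \<ge> r u"
    and "S \<subseteq> V"
  shows "summable (not_absorbed_prob V E m r S) \<and>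
         absorption_time V E m r S
           \<le> (real (card V) ^ 2 * (Max (m ` V) / Min (r ` V))) ^ 3"
proof -
  interpret moran V E m r
    using assms by unfold_locales auto
  show ?thesis using main[OF assms(9)] unfolding nn_def mmax_def rmin_def .
qed

end
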